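(* In the setting below, let $p,q\in X$ with $S_p\subsetneq S_q$ and $|S_p|\ge 2$, and write $p=\sum_{e_i\in S_p}\lambda_ie_i$, $q=\sum_{e_i\in S_q}\theta_ie_i$ (normalized by the convention). Then $\lambda_i=\theta_i$ for every $e_i\in S_p$.
   Context: Setting: $E=\{e_0,\dots,e_n\}\subset\mathbb R^n$ is the vertex set of an $n$-simplex with $e_0+\cdots+e_n=0$, and $X\subset\mathbb R^n\setminus\{0\}$ is a finite set with $E\subseteq X$, no element of $X$ a positive multiple of another, such that every $n+1$ points of $X$ are in good position. (A finite set $A$ is in conical position if $0\notin\operatorname{conv}A$ and no point of $A$ lies in the positive hull—set of nonnegative linear combinations—of the other points; it is in good position otherwise.) For $p\in X$, the support $S_p$ is the minimal subset of $E$ whose positive hull contains $p$; then $p=\sum_{e_i\in S_p}\lambda_ie_i$ uniquely with all $\lambda_i>0$. Convention: each $p\in X$ is replaced by the positive multiple for which $\min_{e_i\in S_p}\lambda_i=1$. *)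

theory Defs
  imports "HOL-Analysis.Analysis"
begin

definition pos_hull :: "'a::real_vector set \<Rightarrow> 'a set" where
  "pos_hull A = {y. \<exists>c. (\<forall>a\<in>A. 0 \<le> c a) \<and> y = (\<Sum>a\<in>A. c a *\<^sub>R a)}"

definition conical_position :: "'a::real_vector set \<Rightarrow> bool" where
  "conical_position A \<longleftrightarrow> 0 \<notin> convex hull A \<and> (\<forall>a\<in>A. a \<notin> pos_hull (A - {a}))"

definition good_position :: "'a::real_vector set \<Rightarrow> bool" where
  "good_position A \<longleftrightarrow> \<not> conical_position A"

definition is_support :: "'a::real_vector set \<Rightarrow> 'a \<Rightarrow> 'a set \<Rightarrow> bool" where
  "is_support E p S \<longleftrightarrow> S \<subseteq> E \<and> p \<in> pos_hull S \<and> (\<forall>T. T \<subset> S \<longrightarrow> p \<notin> pos_hull T)"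

end

theory Submission
  imports Defs
begin

lemma E_rel:
  fixes E :: "'a::real_vector set"
  assumes "finite E" "\<not> affine_dependent E" "(\<Sum>e\<in>E. e) = 0"
    "(\<Sum>e\<in>E. d e *\<^sub>R e) = 0" "x\<in>E" "y\<in>E"
  shows "d x = d y"
proof -
  define m where "m = sum d E / card E"
  have cp: "card E > 0" using assms(1,5) card_gt_0_iff by blast
  have s0: "sum (\<lambda>e. d e - m) E = 0"
    using cp by (simp add: sum_subtractf m_def)
  have v0: "(\<Sum>e\<in>E. (d e - m) *\<^sub>R e) = 0"
    using assms(3,4) by (simp add: scaleR_diff_left sum_subtractf scaleR_sum_right[symmetric])
  have "\<forall>v\<in>E. d v - m = 0"
    using assms(2) affine_dependent_explicit_finite[OF assms(1)] s0 v0 by blast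
  then show ?thesis using assms(5,6) by auto
qed

lemma conical_from_dep:
  fixes A :: "'a::real_vector set"
  assumes fin: "finite A"
    and dep: "\<And>u. (\<Sum>x\<in>A. u x *\<^sub>R x) = 0 \<Longrightarrow> \<exists>s. \<forall>x\<in>A. u x = s * w x"
    and a: "a1\<in>A" "a2\<in>A" "a1\<noteq>a2" "w a1 > 0" "w a2 > 0"
    and b: "b1\<in>A" "b2\<in>A" "b1\<noteq>b2" "w b1 < 0" "w b2 < 0"
  shows "conical_position A"
  unfolding conical_position_def
proof
  show "0 \<notin> convex hull A"
  proof
    assume "0 \<in> convex hull A"
    then obtain u where u: "\<forall>x\<in>A. 0 \<le> u x" "sum u A = 1" "(\<Sum>x\<in>A. u x *\<^sub>R x) = 0"
      unfolding convex_hull_finite[OF fin] by auto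
    obtain s where s: "\<forall>x\<in>A. u x = s * w x" using dep[OF u(3)] by blast
    have "0 \<le> s * w a1" "0 \<le> s * w b1" using u(1) s a b by auto
    then have "s = 0" using a b
      by (smt (verit) mult_neg_pos mult_pos_neg)
    then have "sum u A = 0" using s by simp
    then show False using u(2) by simp
  qed
  show "\<forall>a\<in>A. a \<notin> pos_hull (A - {a})"
  proof (intro ballI notI)
    fix a assume aA: "a \<in> A" and "a \<in> pos_hull (A - {a})"
    then obtain c where c: "\<forall>x\<in>A-{a}. 0 \<le> c x" "a = (\<Sum>x\<in>A-{a}. c x *\<^sub>R x)"
      unfolding pos_hull_def by auto
    define u where "u x = (if x = a then -1 else c x)" for x
    have "(\<Sum>x\<in>A. u x *\<^sub>R x) = u a *\<^sub>R a + (\<Sum>x\<in>A-{a}. u x *\<^sub>R x)"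
      using sum.remove[OF fin aA] by blast
    also have "(\<Sum>x\<in>A-{a}. u x *\<^sub>R x) = (\<Sum>x\<in>A-{a}. c x *\<^sub>R x)"
      by (rule sum.cong) (auto simp: u_def)
    finally have "(\<Sum>x\<in>A. u x *\<^sub>R x) = 0" using c(2) by (simp add: u_def)
    then obtain s where s: "\<forall>x\<in>A. u x = s * w x" using dep by blast
    obtain a' where a': "a' \<in> A" "a' \<noteq> a" "w a' > 0" using a by metis
    obtain b' where b': "b' \<in> A" "b' \<noteq> a" "w b' < 0" using b by metis
    have h1: "0 \<le> s * w a'" using s[rule_format, OF a'(1)] c(1) a'(1,2) by (simp add: u_def) (metis DiffI singletonD)
    have h2: "0 \<le> s * w b'" using s[rule_format, OF b'(1)] c(1) b'(1,2) by (simp add: u_def) (metis DiffI singletonD)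
    then have "s = 0" using h1 a' b'
      by (smt (verit) mult_neg_pos mult_pos_neg)
    then show False using s aA by (auto simp: u_def)
  qed
qed

lemma extend_sum:
  fixes E :: "'a::real_vector set"
  assumes "finite E" "S \<subseteq> E"
  shows "(\<Sum>e\<in>S. c e *\<^sub>R e) = (\<Sum>e\<in>E. (if e \<in> S then c e else 0) *\<^sub>R e)"
proof -
  have "(\<Sum>e\<in>E. (if e \<in> S then c e else 0) *\<^sub>R e) = (\<Sum>e\<in>E. (if e \<in> S then c e *\<^sub>R e else 0))"
    by (rule sum.cong) auto
  also have "\<dots> = (\<Sum>e\<in>E \<inter> S. c e *\<^sub>R e)" using assms(1) by (simp add: sum.inter_restrict)
  finally show ?thesis using assms(2) by (simp add: Int_absorb1)
qed

lemma sum_minus_ext: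
  fixes E :: "'a::real_vector set"
  assumes "finite E" "k \<in> E"
  shows "(\<Sum>x\<in>E-{k}. u x *\<^sub>R x) = (\<Sum>x\<in>E. (if x = k then 0 else u x) *\<^sub>R x)"
proof -
  have "(\<Sum>x\<in>E. (if x = k then 0 else u x) *\<^sub>R x) = (if k = k then 0 else u k) *\<^sub>R k + (\<Sum>x\<in>E-{k}. (if x = k then 0 else u x) *\<^sub>R x)"
    using sum.remove[OF assms] by blast
  also have "\<dots> = (\<Sum>x\<in>E-{k}. u x *\<^sub>R x)" by (auto intro!: sum.cong)
  finally show ?thesis by simp
qed

lemma L2:
  fixes E X :: "'a::euclidean_space set"
  assumes finE: "finite E" and cardE: "card E = DIM('a)+1" and ind: "\<not> affine_dependent E"
    and sE: "(\<Sum>e\<in>E. e) = 0" and EX: "E \<subseteq> X"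
    and good: "\<forall>A. A \<subseteq> X \<and> card A = DIM('a) + 1 \<longrightarrow> good_position A"
    and qX: "q \<in> X" and qE: "q \<notin> E" and SE: "S \<subseteq> E" and z: "z \<in> E" "z \<notin> S"
    and th: "\<forall>e\<in>S. th e > 0" "q = (\<Sum>e\<in>S. th e *\<^sub>R e)"
    and k: "k \<in> S" and ij: "i \<in> S" "j \<in> S" "i \<noteq> j" "th i > th k" "th j > th k"
  shows False
proof -
  define A where "A = insert q (E - {k})"
  define th' where "th' x = (if x \<in> S then th x else 0)" for x
  define w where "w x = (if x = q then 1 else th k - th' x)" for x
  have kE: "k \<in> E" using k SE by auto
  have finA: "finite A" using finE by (simp add: A_def)
  have "card A = DIM('a)+1" unfolding A_def using finE qE kE cardE by (simp add: card_Diff_singleton)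
  moreover have "A \<subseteq> X" using EX qX by (auto simp: A_def)
  ultimately have "good_position A" using good by blast
  moreover have "conical_position A"
  proof (rule conical_from_dep[OF finA, where w = w])
    fix u assume u: "(\<Sum>x\<in>A. u x *\<^sub>R x) = 0"
    define d where "d e = u q * th' e + (if e = k then 0 else u e)" for e
    have q': "q = (\<Sum>e\<in>E. th' e *\<^sub>R e)" unfolding th'_def using extend_sum[OF finE SE] th(2) by simp
    have "(\<Sum>x\<in>A. u x *\<^sub>R x) = u q *\<^sub>R q + (\<Sum>x\<in>E-{k}. u x *\<^sub>R x)"
      unfolding A_def using finE qE by (simp add: sum.insert)
    also have "\<dots> = (\<Sum>e\<in>E. d e *\<^sub>R e)"
      unfolding q' sum_minus_ext[OF finE kE] d_def
      by (simp add: scaleR_add_left sum.distrib scaleR_sum_right)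
    finally have d0: "(\<Sum>e\<in>E. d e *\<^sub>R e) = 0" using u by simp
    have "\<forall>x\<in>A. u x = u q * w x"
    proof
      fix x assume "x \<in> A"
      show "u x = u q * w x"
      proof (cases "x = q")
        case True then show ?thesis by (simp add: w_def)
      next
        case False
        then have xE: "x \<in> E" "x \<noteq> k" using \<open>x \<in> A\<close> by (auto simp: A_def)
        have "d x = d k" using E_rel[OF finE ind sE d0 xE(1) kE] .
        then show ?thesis using xE False k qE kE by (simp add: d_def w_def th'_def algebra_simps)
      qed
    qed
    then show "\<exists>s. \<forall>x\<in>A. u x = s * w x" by blast
  next
    show "q \<in> A" by (simp add: A_def)
    show "z \<in> A" using z k by (auto simp: A_def)
    show "q \<noteq> z" using z qE by auto
    show "w q > 0" by (simp add: w_def)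
    show "w z > 0" using z qE k th(1) by (auto simp: w_def th'_def)
    show "i \<in> A" "j \<in> A" using ij SE by (auto simp: A_def)
    show "i \<noteq> j" by fact
    show "w i < 0" "w j < 0" using ij SE qE by (auto simp: w_def th'_def)
  qed
  ultimately show False by (simp add: good_position_def)
qed

lemma sum_minus_ext2:
  fixes E :: "'a::real_vector set"
  assumes "finite E"
  shows "(\<Sum>x\<in>E-K. u x *\<^sub>R x) = (\<Sum>x\<in>E. (if x \<in> K then 0 else u x) *\<^sub>R x)"
proof -
  have "(\<Sum>x\<in>E. (if x \<in> K then 0 else u x) *\<^sub>R x) = (\<Sum>x\<in>E. (if x \<in> E - K then u x *\<^sub>R x else 0))"
    by (rule sum.cong) auto
  also have "\<dots> = (\<Sum>x\<in>E \<inter> (E-K). u x *\<^sub>R x)" using assms by (simp add: sum.inter_restrict)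
  finally show ?thesis by (simp add: Int_absorb1)
qed

lemma L1:
  fixes E X :: "'a::euclidean_space set"
  assumes finE: "finite E" and cardE: "card E = DIM('a)+1" and ind: "\<not> affine_dependent E"
    and sE: "(\<Sum>e\<in>E. e) = 0" and EX: "E \<subseteq> X"
    and good: "\<forall>A. A \<subseteq> X \<and> card A = DIM('a) + 1 \<longrightarrow> good_position A"
    and pX: "p \<in> X" and pE: "p \<notin> E" and qX: "q \<in> X" and qE: "q \<notin> E" and pq: "p \<noteq> q"
    and Sp: "Sp \<subseteq> Sq" and Sq: "Sq \<subseteq> E" and z: "z \<in> E" "z \<notin> Sq"
    and i: "i \<in> Sq" "i \<notin> Sp"
    and lam: "\<forall>e\<in>Sp. lam e > 0" "p = (\<Sum>e\<in>Sp. lam e *\<^sub>R e)"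
    and th: "\<forall>e\<in>Sq. th e > 0" "q = (\<Sum>e\<in>Sq. th e *\<^sub>R e)"
    and mj: "m \<in> Sp" "j \<in> Sp" "lam m * th j < th m * lam j"
  shows False
proof -
  define A where "A = insert p (insert q (E - {z, m}))"
  define th' where "th' x = (if x \<in> Sq then th x else 0)" for x
  define lam' where "lam' x = (if x \<in> Sp then lam x else 0)" for x
  define w where "w x = (if x = p then th m else if x = q then - lam m
                        else lam m * th' x - th m * lam' x)" for x
  have SpE: "Sp \<subseteq> E" using Sp Sq by auto
  have mE: "m \<in> E" "m \<in> Sq" using mj Sp Sq by auto
  have zm: "z \<noteq> m" using z mE by auto
  have finA: "finite A" using finE by (simp add: A_def)
  have "card (E - {z, m}) = card E - 2" using finE z mE zm by (simp add: card_Diff_subset)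
  moreover have "DIM('a) \<ge> 1" by (simp add: DIM_positive Suc_leI)
  ultimately have "card A = DIM('a)+1" unfolding A_def using finE qE pE pq cardE by simp
  moreover have "A \<subseteq> X" using EX qX pX by (auto simp: A_def)
  ultimately have "good_position A" using good by blast
  moreover have "conical_position A"
  proof (rule conical_from_dep[OF finA, where w = w])
    fix u assume u: "(\<Sum>x\<in>A. u x *\<^sub>R x) = 0"
    define d where "d e = u p * lam' e + u q * th' e + (if e \<in> {z, m} then 0 else u e)" for e
    have q': "q = (\<Sum>e\<in>E. th' e *\<^sub>R e)" unfolding th'_def using extend_sum[OF finE Sq] th(2) by simp
    have p': "p = (\<Sum>e\<in>E. lam' e *\<^sub>R e)" unfolding lam'_def using extend_sum[OF finE SpE] lam(2) by simp
    have "(\<Sum>x\<in>A. u x *\<^sub>R x) = u p *\<^sub>R p + (u q *\<^sub>R q + (\<Sum>x\<in>E-{z, m}. u x *\<^sub>R x))"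
      unfolding A_def using finE qE pE pq by (simp add: sum.insert)
    also have "\<dots> = (\<Sum>e\<in>E. d e *\<^sub>R e)"
      unfolding q' p' sum_minus_ext2[OF finE] d_def
      by (simp add: scaleR_add_left sum.distrib scaleR_sum_right)
    finally have d0: "(\<Sum>e\<in>E. d e *\<^sub>R e) = 0" using u by simp
    have dz: "d z = 0" using z Sp by (auto simp: d_def lam'_def th'_def)
    have dm: "d m = 0" using E_rel[OF finE ind sE d0 mE(1) z(1)] dz by simp
    have thpos: "th m > 0" using th(1) mE by auto
    have lm: "lam m > 0" using lam(1) mj by auto
    define s where "s = u p / th m"
    have upq: "u p * lam m + u q * th m = 0" using dm mE mj zm by (simp add: d_def lam'_def th'_def)
    have uq: "u q = s * (- lam m)" using upq thpos unfolding s_def by (simp add: field_simps)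
    have up: "u p = s * th m" using thpos unfolding s_def by simp
    have "\<forall>x\<in>A. u x = s * w x"
    proof
      fix x assume "x \<in> A"
      show "u x = s * w x"
      proof (cases "x = p")
        case True then show ?thesis using up by (simp add: w_def)
      next
        case False
        note np = False
        show ?thesis
        proof (cases "x = q")
          case True then show ?thesis using uq pq by (simp add: w_def)
        next
          case False
          then have xE: "x \<in> E" "x \<noteq> z" "x \<noteq> m" using \<open>x \<in> A\<close> False np by (auto simp: A_def)
          have "d x = d z" using E_rel[OF finE ind sE d0 xE(1) z(1)] .
          then have "u p * lam' x + u q * th' x + u x = 0" using dz xE by (simp add: d_def)
          then show ?thesis using False np up uq by (simp add: w_def algebra_simps)
        qed
      qed
    qed
    then show "\<exists>s. \<forall>x\<in>A. u x = s * w x" by blast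
  next
    show "p \<in> A" by (simp add: A_def)
    show "i \<in> A" using i Sq z mj by (auto simp: A_def)
    show "p \<noteq> i" using i Sq pE by auto
    show "w p > 0" using th(1) mE by (simp add: w_def)
    show "w i > 0" using i Sq pE qE lam(1) th(1) mj by (auto simp: w_def th'_def lam'_def)
    show "q \<in> A" by (simp add: A_def)
    have jm: "j \<noteq> m" using mj by auto
    show "j \<in> A" using mj jm Sp SpE z by (auto simp: A_def)
    show "q \<noteq> j" using mj SpE qE by auto
    show "w q < 0" using lam(1) mj pq by (simp add: w_def)
    show "w j < 0" using mj SpE pE qE Sp by (auto simp: w_def th'_def lam'_def)
  qed
  ultimately show False by (simp add: good_position_def)
qed

lemma not_in_E:
  fixes E :: "'a::real_vector set"
  assumes finE: "finite E" and ind: "\<not> affine_dependent E" and sE: "(\<Sum>e\<in>E. e) = 0"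
    and SE: "S \<subseteq> E" and cS: "card S \<ge> 2" and z: "z \<in> E" "z \<notin> S"
    and c: "\<forall>e\<in>S. c e > 0" "x = (\<Sum>e\<in>S. c e *\<^sub>R e)"
  shows "x \<notin> E"
proof
  assume xE: "x \<in> E"
  define d where "d e = (if e \<in> S then c e else 0) - (if e = x then 1 else 0)" for e
  have "(\<Sum>e\<in>E. d e *\<^sub>R e) = (\<Sum>e\<in>E. (if e \<in> S then c e else 0) *\<^sub>R e) - (\<Sum>e\<in>E. (if e = x then 1 else 0) *\<^sub>R e)"
    unfolding d_def by (simp add: scaleR_diff_left sum_subtractf)
  also have "\<dots> = x - x"
  proof -
    have "(\<Sum>e\<in>E. (if e = x then 1 else 0) *\<^sub>R e) = (\<Sum>e\<in>E. (if e = x then e else 0))"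
      by (rule sum.cong) auto
    also have "\<dots> = x" using finE xE by simp
    finally show ?thesis using extend_sum[OF finE SE, of c] c(2) by simp
  qed
  finally have d0: "(\<Sum>e\<in>E. d e *\<^sub>R e) = 0" by simp
  have "finite S" using finE SE finite_subset by blast
  then obtain i where i: "i \<in> S" "i \<noteq> x"
    using cS by (metis card_le_Suc0_iff_eq not_less_eq_eq numeral_2_eq_2)
  have "d i = d z" using E_rel[OF finE ind sE d0] i SE z by blast
  then show False using i z c(1) by (auto simp: d_def split: if_splits)
qed

lemma support_proper:
  fixes E :: "'a::real_vector set"
  assumes finE: "finite E" and sE: "(\<Sum>e\<in>E. e) = 0"
    and supp: "is_support E q S" and ne: "S \<noteq> {}"
    and c: "\<forall>e\<in>S. c e > 0" "q = (\<Sum>e\<in>S. c e *\<^sub>R e)"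
  shows "S \<noteq> E"
proof
  assume SE: "S = E"
  have fi: "finite (c ` E)" "c ` E \<noteq> {}" using finE ne SE by auto
  obtain j where j1: "j \<in> E" "c j = Min (c ` E)" using Min_in[OF fi] by auto
  have j: "j \<in> E" "\<forall>e\<in>E. c j \<le> c e" using j1 Min_le[OF fi(1)] by auto
  have "(\<Sum>e\<in>E. (c e - c j) *\<^sub>R e) = q - c j *\<^sub>R (\<Sum>e\<in>E. e)"
    using c(2) SE by (simp add: scaleR_diff_left sum_subtractf scaleR_sum_right)
  also have "\<dots> = q" using sE by simp
  finally have q1: "(\<Sum>e\<in>E. (c e - c j) *\<^sub>R e) = q" .
  have "(\<Sum>e\<in>E. (c e - c j) *\<^sub>R e) = (c j - c j) *\<^sub>R j + (\<Sum>e\<in>E-{j}. (c e - c j) *\<^sub>R e)"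
    using sum.remove[OF finE j(1)] by blast
  then have "q = (\<Sum>e\<in>E-{j}. (c e - c j) *\<^sub>R e)" using q1 by simp
  then have "q \<in> pos_hull (E - {j})" unfolding pos_hull_def using j(2) by (intro CollectI exI[of _ "\<lambda>e. c e - c j"]) auto
  moreover have "E - {j} \<subset> S" using SE j by auto
  ultimately show False using supp unfolding is_support_def by blast
qed


theorem proposition6p5:
  fixes E X :: "'a::euclidean_space set"
    and p q :: 'a and Sp Sq :: "'a set" and lam theta :: "'a \<Rightarrow> real"
  assumes simplex: "card E = DIM('a) + 1" "\<not> affine_dependent E" "(\<Sum>e\<in>E. e) = 0"
    and X_fin: "finite X" and E_sub: "E \<subseteq> X" and X_nz: "0 \<notin> X"
    and no_pos_mult: "\<forall>x\<in>X. \<forall>y\<in>X. \<forall>c::real. c > 0 \<and> y = c *\<^sub>R x \<longrightarrow> y = x"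
    and good: "\<forall>A. A \<subseteq> X \<and> card A = DIM('a) + 1 \<longrightarrow> good_position A"
    and normalized: "\<forall>x\<in>X. \<forall>S \<mu>. is_support E x S \<and> (\<forall>e\<in>S. \<mu> e > 0)
                        \<and> x = (\<Sum>e\<in>S. \<mu> e *\<^sub>R e) \<longrightarrow> Min (\<mu> ` S) = 1"
    and pq: "p \<in> X" "q \<in> X"
    and supp: "is_support E p Sp" "is_support E q Sq"
    and sub: "Sp \<subset> Sq" and card2: "card Sp \<ge> 2"
    and lam: "\<forall>e\<in>Sp. lam e > 0" "p = (\<Sum>e\<in>Sp. lam e *\<^sub>R e)"
    and theta: "\<forall>e\<in>Sq. theta e > 0" "q = (\<Sum>e\<in>Sq. theta e *\<^sub>R e)"
  shows "\<forall>e\<in>Sp. lam e = theta e"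
proof -
  have finE: "finite E" using simplex(1) card_ge_0_finite by (metis card_ge_0_finite zero_less_Suc add.commute plus_1_eq_Suc)
  have SqE: "Sq \<subseteq> E" using supp(2) by (simp add: is_support_def)
  have SpE: "Sp \<subseteq> E" using supp(1) by (simp add: is_support_def)
  have finSp: "finite Sp" and finSq: "finite Sq" using finE SpE SqE finite_subset by auto
  have neSp: "Sp \<noteq> {}" using card2 by auto
  have cSq: "card Sq \<ge> 2" using card2 psubset_card_mono[OF finSq sub] by simp
  have "Sq \<noteq> E" using support_proper[OF finE simplex(3) supp(2) _ theta] sub by auto
  then obtain z where z: "z \<in> E" "z \<notin> Sq" using SqE by auto
  obtain i where i: "i \<in> Sq" "i \<notin> Sp" using sub by auto
  have qE: "q \<notin> E" using not_in_E[OF finE simplex(2,3) SqE cSq z theta] .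
  have pE: "p \<notin> E" using not_in_E[OF finE simplex(2,3) SpE card2 z(1) _ lam] z sub by auto
  have pq_ne: "p \<noteq> q"
  proof
    assume "p = q"
    define d where "d e = (if e \<in> Sp then lam e else 0) - (if e \<in> Sq then theta e else 0)" for e
    have "(\<Sum>e\<in>E. d e *\<^sub>R e) = p - q"
      unfolding d_def using extend_sum[OF finE SpE, of lam] extend_sum[OF finE SqE, of theta] lam(2) theta(2)
      by (simp add: scaleR_diff_left sum_subtractf)
    then have d0: "(\<Sum>e\<in>E. d e *\<^sub>R e) = 0" using \<open>p = q\<close> by simp
    have "d i = d z" using E_rel[OF finE simplex(2,3) d0] i z SqE by blast
    then show False using i z theta(1) psubset_imp_subset[OF sub] by (auto simp: d_def split: if_splits)
  qed
  have ratio: "\<And>m j. m \<in> Sp \<Longrightarrow> j \<in> Sp \<Longrightarrow> \<not> lam m * theta j < theta m * lam j"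
    using L1[OF finE simplex(1,2,3) E_sub good pq(1) pE pq(2) qE pq_ne _ SqE z i lam theta] sub by blast
  have minl: "Min (lam ` Sp) = 1" using normalized pq(1) supp(1) lam by blast
  have mint: "Min (theta ` Sq) = 1" using normalized pq(2) supp(2) theta by blast
  have fl: "finite (lam ` Sp)" "lam ` Sp \<noteq> {}" using finSp neSp by auto
  have ft: "finite (theta ` Sq)" "theta ` Sq \<noteq> {}" using finSq neSp sub by auto
  obtain j where j: "j \<in> Sp" "lam j = 1" using Min_in[OF fl] minl by auto
  obtain b where b: "b \<in> Sq" "theta b = 1" using Min_in[OF ft] mint by auto
  have lge: "\<forall>e\<in>Sp. lam e \<ge> 1" using Min_le[OF fl(1)] minl by auto
  have tge: "\<forall>e\<in>Sq. theta e \<ge> 1" using Min_le[OF ft(1)] mint by auto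
  have eq: "\<forall>e\<in>Sp. theta e = lam e * theta j"
  proof
    fix e assume e: "e \<in> Sp"
    have "\<not> lam e * theta j < theta e * lam j" "\<not> lam j * theta e < theta j * lam e"
      using ratio e j(1) by auto
    then show "theta e = lam e * theta j" using j(2) by (simp add: algebra_simps)
  qed
  have "theta j = 1"
  proof (rule ccontr)
    assume "theta j \<noteq> 1"
    then have r: "theta j > 1" using tge j(1) sub by force
    obtain e1 e2 where e12: "e1 \<in> Sp" "e2 \<in> Sp" "e1 \<noteq> e2"
      using card2 by (metis card_le_Suc0_iff_eq finSp not_less_eq_eq numeral_2_eq_2)
    have "theta e1 > theta b" "theta e2 > theta b"
      using eq e12 lge r b(2)
      by (smt (verit, best) mult_le_cancel_right1)+
    then show False
      using L2[OF finE simplex(1,2,3) E_sub good pq(2) qE SqE z theta b(1), of e1 e2] e12 sub by blast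
  qed
  then show ?thesis using eq by simp
qed

end
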